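(* There is an absolute constant $c$ such that for every $N\ge1$ and every $\epsilon\in[0,1]$, every randomized XOR decision tree computing ${\rm MAJORITY}$ on $N$-bit inputs with zero-sided error $\epsilon$ has cost at least $\frac23N-\epsilon N-c\sqrt N$.
   Context: For $X=X_0X_1\cdots X_{N-1}\in\{0,1\}^N$, ${\rm MAJORITY}(X)=0$ if $X$ contains more zeros than ones and ${\rm MAJORITY}(X)=1$ otherwise. An XOR decision tree on $N$-bit inputs is a deterministic adaptive algorithm that on input $X$ makes a sequence of queries, each either a single bit $X_i$ or $X_i\oplus X_j$ ($0\le i,j\le N-1$), each chosen depending on previous answers, and then outputs a value. A randomized XOR decision tree is a probability distribution over XOR decision trees; its cost on input $X$ is the maximum number of queries made on $X$ over all trees in its support, and its cost is the maximum of this over all $X\in\{0,1\}^N$. It computes $f$ with zero-sided error $\epsilon$ if on every input $X$ it outputs $f(X)$ with probability at least $1-\epsilon$ and otherwise outputs "I don't know" (never an incorrect value). *)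

theory Defs
  imports "HOL-Probability.Probability_Mass_Function" "HOL-Library.Extended_Real"
begin

(* An input X in {0,1}^N is a bool list of length N (True = 1). *)

definition majority :: "bool list \<Rightarrow> bool" where
  "majority X = (\<not> (length (filter Not X) > length (filter id X)))"

datatype query = QBit nat | QXor nat nat

fun qans :: "query \<Rightarrow> bool list \<Rightarrow> bool" where
  "qans (QBit i) X = X ! i"
| "qans (QXor i j) X = (X ! i \<noteq> X ! j)"

fun qvalid :: "nat \<Rightarrow> query \<Rightarrow> bool" where
  "qvalid N (QBit i) = (i < N)"
| "qvalid N (QXor i j) = (i < N \<and> j < N)"

(* Deterministic XOR decision tree; leaves output Some b (a value) or None ("I don't know").
   At a node, answer 0 (False) goes to the left subtree, answer 1 (True) to the right. *)
datatype xtree = Leaf "bool option" | Node query xtree xtree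

fun valid_tree :: "nat \<Rightarrow> xtree \<Rightarrow> bool" where
  "valid_tree N (Leaf _) = True"
| "valid_tree N (Node q l r) = (qvalid N q \<and> valid_tree N l \<and> valid_tree N r)"

fun run :: "xtree \<Rightarrow> bool list \<Rightarrow> bool option" where
  "run (Leaf out) X = out"
| "run (Node q l r) X = (if qans q X then run r X else run l X)"

fun nqueries :: "xtree \<Rightarrow> bool list \<Rightarrow> nat" where
  "nqueries (Leaf _) X = 0"
| "nqueries (Node q l r) X = Suc (if qans q X then nqueries r X else nqueries l X)"

definition rtree_on :: "nat \<Rightarrow> xtree pmf \<Rightarrow> bool" where
  "rtree_on N T = (\<forall>t\<in>set_pmf T. valid_tree N t)"

definition rcost :: "nat \<Rightarrow> xtree pmf \<Rightarrow> enat" where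
  "rcost N T = (SUP X\<in>{X. length X = N}. SUP t\<in>set_pmf T. enat (nqueries t X))"

definition zero_sided :: "nat \<Rightarrow> (bool list \<Rightarrow> bool) \<Rightarrow> real \<Rightarrow> xtree pmf \<Rightarrow> bool" where
  "zero_sided N f eps T = (\<forall>X. length X = N \<longrightarrow>
     measure_pmf.prob T {t. run t X = Some (f X)} \<ge> 1 - eps \<and>
     (\<forall>t\<in>set_pmf T. run t X = Some (f X) \<or> run t X = None))"

end

theory Submission
  imports Defs
begin


definition flipS :: "nat set \<Rightarrow> bool list \<Rightarrow> bool list" where
  "flipS F X = map (\<lambda>i. if i \<in> F then \<not> X!i else X!i) [0..<length X]"

lemma flipS_length[simp]: "length (flipS F X) = length X"
  by (simp add: flipS_def)

lemma flipS_nth[simp]: "k < length X \<Longrightarrow> flipS F X ! k = (if k \<in> F then \<not> X!k else X!k)"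
  by (simp add: flipS_def)

lemma flipS_flipS[simp]: "flipS F (flipS F X) = X"
  by (rule nth_equalityI) auto

definition eqv :: "bool list set \<Rightarrow> nat \<Rightarrow> nat \<Rightarrow> bool" where
  "eqv S i j = (\<forall>X\<in>S. \<forall>Y\<in>S. (X!i = X!j) = (Y!i = Y!j))"

definition dtm :: "bool list set \<Rightarrow> nat \<Rightarrow> bool" where
  "dtm S i = (\<forall>X\<in>S. \<forall>Y\<in>S. X!i = Y!i)"

definition cls :: "nat \<Rightarrow> bool list set \<Rightarrow> nat \<Rightarrow> nat set" where
  "cls N S i = {j. j < N \<and> eqv S i j}"

definition sg :: "bool \<Rightarrow> int" where "sg b = (if b then 1 else -1)"

definition csum :: "nat \<Rightarrow> bool list set \<Rightarrow> nat \<Rightarrow> bool list \<Rightarrow> int" where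
  "csum N S i X = (\<Sum>m\<in>cls N S i. sg (X!m))"

definition nb :: "nat \<Rightarrow> bool list set \<Rightarrow> nat \<Rightarrow> bool" where
  "nb N S i = (\<exists>X\<in>S. csum N S i X \<noteq> 0)"

definition trm :: "nat \<Rightarrow> bool list set \<Rightarrow> nat \<Rightarrow> real" where
  "trm N S k = (if \<not> dtm S k \<and> nb N S k then 1 / real (card (cls N S k)) else 0)"

definition Phi :: "nat \<Rightarrow> bool list set \<Rightarrow> real" where
  "Phi N S = (\<Sum>k<N. trm N S k)"

definition sat :: "nat \<Rightarrow> (query \<times> bool) list \<Rightarrow> bool list set" where
  "sat N Q = {X. length X = N \<and> (\<forall>(q,a)\<in>set Q. qans q X = a)}"

definition cu :: "nat \<Rightarrow> bool list set \<Rightarrow> nat set \<Rightarrow> bool" where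
  "cu N S F = (F \<subseteq> {..<N} \<and> (\<forall>i\<in>F. \<not> dtm S i) \<and> (\<forall>i\<in>F. \<forall>j<N. eqv S i j \<longrightarrow> j \<in> F))"

lemma eqv_refl: "eqv S i i" by (simp add: eqv_def)
lemma eqv_sym: "eqv S i j \<Longrightarrow> eqv S j i" by (auto simp: eqv_def)
lemma eqv_trans: "eqv S i j \<Longrightarrow> eqv S j k \<Longrightarrow> eqv S i k"
  unfolding eqv_def by (smt (verit))
lemma det_det_eqv: "dtm S i \<Longrightarrow> dtm S j \<Longrightarrow> eqv S i j"
  unfolding eqv_def dtm_def by metis
lemma det_eqv: "dtm S i \<Longrightarrow> eqv S i j \<Longrightarrow> dtm S j"
  unfolding eqv_def dtm_def by metis
lemma eqv_mono: "S' \<subseteq> S \<Longrightarrow> eqv S i j \<Longrightarrow> eqv S' i j"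
  unfolding eqv_def by blast
lemma det_mono: "S' \<subseteq> S \<Longrightarrow> dtm S i \<Longrightarrow> dtm S' i"
  unfolding dtm_def by blast

lemma cls_finite[simp]: "finite (cls N S i)" by (simp add: cls_def)
lemma cls_self: "i < N \<Longrightarrow> i \<in> cls N S i" by (simp add: cls_def eqv_refl)
lemma cls_eq: "j \<in> cls N S i \<Longrightarrow> cls N S j = cls N S i"
  unfolding cls_def using eqv_sym eqv_trans by blast
lemma cls_card_pos: "i < N \<Longrightarrow> card (cls N S i) > 0"
  using cls_self cls_finite by (metis card_gt_0_iff empty_iff)

lemma cu_cls: "i < N \<Longrightarrow> \<not> dtm S i \<Longrightarrow> cu N S (cls N S i)"
  unfolding cu_def cls_def using det_eqv eqv_sym eqv_trans by blast

lemma sat_flip: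
  assumes Q: "\<forall>(q,a)\<in>set Q. qvalid N q" and F: "cu N (sat N Q) F" and X: "X \<in> sat N Q"
  shows "flipS F X \<in> sat N Q"
proof -
  let ?S = "sat N Q"
  have "qans q (flipS F X) = a" if qa: "(q,a) \<in> set Q" for q a
  proof (cases q)
    case (QBit i)
    have iN: "i < N" using Q qa QBit by auto
    have "dtm ?S i" using qa QBit unfolding dtm_def sat_def by fastforce
    then have "i \<notin> F" using F unfolding cu_def by blast
    then show ?thesis using X qa QBit iN unfolding sat_def by auto
  next
    case (QXor i j)
    have ij: "i < N" "j < N" using Q qa QXor by auto
    have "eqv ?S i j" using qa QXor unfolding eqv_def sat_def by fastforce
    then have "i \<in> F \<longleftrightarrow> j \<in> F" using F ij eqv_sym unfolding cu_def by blast
    then show ?thesis using X qa QXor ij unfolding sat_def by auto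
  qed
  then show ?thesis using X unfolding sat_def by auto
qed

lemma cls_agree_or_disagree:
  assumes "X \<in> S" "Y \<in> S"
  shows "(\<forall>m\<in>cls N S i. X!m = Y!m) \<or> (\<forall>m\<in>cls N S i. X!m \<noteq> Y!m)"
proof (cases "X!i = Y!i")
  case True
  then show ?thesis using assms unfolding cls_def eqv_def by (smt (verit) mem_Collect_eq)
next
  case False
  then show ?thesis using assms unfolding cls_def eqv_def by (smt (verit) mem_Collect_eq)
qed

lemma csum_abs:
  assumes "X \<in> S" "Y \<in> S"
  shows "csum N S i Y = csum N S i X \<or> csum N S i Y = - csum N S i X"
proof -
  from cls_agree_or_disagree[OF assms, of N i] show ?thesis
  proof
    assume "\<forall>m\<in>cls N S i. X!m = Y!m"
    then show ?thesis unfolding csum_def by auto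
  next
    assume h: "\<forall>m\<in>cls N S i. X!m \<noteq> Y!m"
    have "csum N S i Y = (\<Sum>m\<in>cls N S i. - sg (X!m))"
      unfolding csum_def by (rule sum.cong) (use h in \<open>auto simp: sg_def\<close>)
    then show ?thesis by (simp add: csum_def sum_negf)
  qed
qed

lemma nb_iff: assumes "X \<in> S" shows "nb N S i \<longleftrightarrow> csum N S i X \<noteq> 0"
proof
  assume "nb N S i"
  then obtain Y where "Y \<in> S" "csum N S i Y \<noteq> 0" unfolding nb_def by blast
  then show "csum N S i X \<noteq> 0" using csum_abs[of Y S X N i] assms by auto
qed (use assms in \<open>auto simp: nb_def\<close>)



lemma sat_finite: "finite (sat N Q)"
proof -
  have "sat N Q \<subseteq> {xs. set xs \<subseteq> UNIV \<and> length xs = N}" unfolding sat_def by auto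
  moreover have "finite {xs. set xs \<subseteq> (UNIV::bool set) \<and> length xs = N}"
    by (rule finite_lists_length_eq) simp
  ultimately show ?thesis by (rule finite_subset)
qed

lemma sat_len: "X \<in> sat N Q \<Longrightarrow> length X = N" by (simp add: sat_def)

lemma cls_sub: "cls N S i \<subseteq> {..<N}" by (auto simp: cls_def)

lemma cls_undet: "m \<in> cls N S i \<Longrightarrow> \<not> dtm S i \<Longrightarrow> \<not> dtm S m"
  unfolding cls_def using det_eqv eqv_sym by blast

lemma cls_mem_iff: "i < N \<Longrightarrow> k < N \<Longrightarrow> i \<in> cls N S k \<longleftrightarrow> k \<in> cls N S i"
  unfolding cls_def using eqv_sym by blast

lemma flip_sat_pres:
  assumes Q: "\<forall>(q,a)\<in>set Q. qvalid N q" and F: "cu N (sat N Q) F"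
    and pres: "\<forall>X\<in>sat N Q. f (flipS F X) = f X"
    and X: "X \<in> {X\<in>sat N Q. f X = a}"
  shows "flipS F X \<in> {X\<in>sat N Q. f X = a}"
  using sat_flip[OF Q F] X pres by auto

lemma flip_sat_tog:
  assumes Q: "\<forall>(q,a)\<in>set Q. qvalid N q" and F: "cu N (sat N Q) F"
    and tog: "\<forall>X\<in>sat N Q. f (flipS F X) = (\<not> f X)"
    and X: "X \<in> {X\<in>sat N Q. f X = a}"
  shows "flipS F X \<in> {X\<in>sat N Q. f X = (\<not> a)}"
  using sat_flip[OF Q F] X tog by auto

lemma outside_facts:
  assumes Q: "\<forall>(q,a)\<in>set Q. qvalid N q"
    and S: "S = sat N Q" and S': "S' = {X\<in>S. f X = a}" "S' \<noteq> {}"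
    and G: "cu N S G" "\<forall>X\<in>S. f (flipS G X) = (\<not> f X)" "G \<subseteq> A"
    and disj: "\<forall>k<N. \<not> dtm S k \<longrightarrow> k \<notin> A \<longrightarrow> cls N S k \<inter> A = {}"
    and qidx: "\<forall>k<N. \<not> dtm S k \<longrightarrow> k \<notin> A \<longrightarrow> (\<forall>X\<in>S. f (flipS (cls N S k) X) = f X)"
    and k: "k < N" "k \<notin> A" and False: "\<not> dtm S k"
  shows "cls N S' k = cls N S k \<and> \<not> dtm S' k \<and> nb N S' k = nb N S k"
proof -
  let ?C = "cls N S k"
  have cuC: "cu N S ?C" using cu_cls[OF k(1) False] .
  have presC: "\<And>X. X \<in> S' \<Longrightarrow> flipS ?C X \<in> S'"
    using flip_sat_pres[OF Q, of ?C f] cuC qidx k False S S' by blast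
  have togG: "\<And>X. X \<in> S \<Longrightarrow> X \<notin> S' \<Longrightarrow> flipS G X \<in> S'"
    using sat_flip[OF Q] G S S' by auto
  have lenS: "\<And>X. X \<in> S \<Longrightarrow> length X = N" using S sat_len by blast
  have SS': "S' \<subseteq> S" using S' by auto
  obtain X0 where X0: "X0 \<in> S'" using S' by blast
  have kC: "k \<in> ?C" using cls_self k by blast
  have ndet: "\<not> dtm S' k"
  proof
    assume "dtm S' k"
    moreover have "flipS ?C X0 \<in> S'" using presC X0 by blast
    moreover have "flipS ?C X0 ! k \<noteq> X0 ! k" using kC k lenS X0 SS' by auto
    ultimately show False using X0 unfolding dtm_def by blast
  qed
  have eq: "eqv S' k l \<longleftrightarrow> eqv S k l" if l: "l < N" for l
  proof
    assume e: "eqv S' k l"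
    show "eqv S k l"
    proof (cases "l \<in> A")
      case True
      then have lC: "l \<notin> ?C" using disj k False by blast
      have X1: "flipS ?C X0 \<in> S'" using presC X0 by blast
      have "flipS ?C X0 ! k \<noteq> X0 ! k" "flipS ?C X0 ! l = X0 ! l"
        using kC lC k l lenS X0 SS' by auto
      moreover have "(X0!k = X0!l) = (flipS ?C X0 ! k = flipS ?C X0 ! l)"
        using e X0 X1 unfolding eqv_def by blast
      ultimately show ?thesis by auto
    next
      case lA: False
      have kG: "k \<notin> G" and lG: "l \<notin> G" using G(3) k lA by auto
      define h where "h X = (if X \<in> S' then X else flipS G X)" for X
      have hS: "h X \<in> S'" if "X \<in> S" for X using togG that h_def by auto
      have hk: "h X ! k = X ! k \<and> h X ! l = X ! l" if "X \<in> S" for X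
        using that kG lG lenS k l h_def by auto
      show ?thesis unfolding eqv_def
      proof (intro ballI)
        fix X Y assume "X \<in> S" "Y \<in> S"
        then have "(h X ! k = h X ! l) = (h Y ! k = h Y ! l)" using e hS unfolding eqv_def by blast
        then show "(X ! k = X ! l) = (Y ! k = Y ! l)" using hk \<open>X \<in> S\<close> \<open>Y \<in> S\<close> by simp
      qed
    qed
  qed (rule eqv_mono[OF SS'])
  have clseq: "cls N S' k = ?C" unfolding cls_def using eq by blast
  have "nb N S' k = nb N S k"
    using nb_iff[OF X0, of N k] nb_iff[of X0 S N k] X0 SS' clseq by (auto simp: csum_def)
  then show ?thesis using ndet clseq by blast
qed

lemma trm_eq_outside:
  assumes Q: "\<forall>(q,a)\<in>set Q. qvalid N q"
    and S: "S = sat N Q" and S': "S' = {X\<in>S. f X = a}" "S' \<noteq> {}"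
    and G: "cu N S G" "\<forall>X\<in>S. f (flipS G X) = (\<not> f X)" "G \<subseteq> A"
    and disj: "\<forall>k<N. \<not> dtm S k \<longrightarrow> k \<notin> A \<longrightarrow> cls N S k \<inter> A = {}"
    and qidx: "\<forall>k<N. \<not> dtm S k \<longrightarrow> k \<notin> A \<longrightarrow> (\<forall>X\<in>S. f (flipS (cls N S k) X) = f X)"
    and k: "k < N" "k \<notin> A"
  shows "trm N S' k = trm N S k"
proof (cases "dtm S k")
  case True
  have "S' \<subseteq> S" using S'(1) by blast
  then have "dtm S' k" using det_mono True by blast
  then show ?thesis using True by (simp add: trm_def)
next
  case False
  have h: "cls N S' k = cls N S k \<and> \<not> dtm S' k \<and> nb N S' k = nb N S k"
    by (rule outside_facts[OF assms False])
  show ?thesis unfolding trm_def using h False by presburger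
qed

lemma trm_nonneg: "trm N S k \<ge> 0" by (simp add: trm_def)

lemma trm_le1: "k < N \<Longrightarrow> trm N S k \<le> 1"
  using cls_card_pos[of k N S] by (auto simp: trm_def)

lemma Phi_nonneg: "Phi N S \<ge> 0" unfolding Phi_def by (rule sum_nonneg) (simp add: trm_nonneg)

lemma Phi_le: "Phi N S \<le> real N"
proof -
  have "Phi N S \<le> (\<Sum>k<N. 1)" unfolding Phi_def by (rule sum_mono) (simp add: trm_le1)
  then show ?thesis by simp
qed

lemma sum_cls:
  assumes i: "i < N" "\<not> dtm S i"
  shows "(\<Sum>k\<in>cls N S i. trm N S k) = (if nb N S i then 1 else 0)"
proof -
  have "\<And>k. k \<in> cls N S i \<Longrightarrow> trm N S k = (if nb N S i then 1 / real (card (cls N S i)) else 0)"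
  proof -
    fix k assume k: "k \<in> cls N S i"
    have c: "cls N S k = cls N S i" using cls_eq[OF k] .
    have "\<not> dtm S k" using cls_undet[OF k i(2)] .
    moreover have "nb N S k = nb N S i" unfolding nb_def csum_def c ..
    ultimately show "trm N S k = (if nb N S i then 1 / real (card (cls N S i)) else 0)"
      by (simp add: trm_def c)
  qed
  then have "(\<Sum>k\<in>cls N S i. trm N S k) = (\<Sum>k\<in>cls N S i. (if nb N S i then 1 / real (card (cls N S i)) else 0))"
    by (rule sum.cong[OF refl])
  also have "\<dots> = (if nb N S i then 1 else 0)" using cls_card_pos[OF i(1), of S] by (simp add: card_gt_0_iff)
  finally show ?thesis .
qed

lemma Phi_split:
  assumes "A \<subseteq> {..<N}"
  shows "Phi N S = (\<Sum>k\<in>{..<N} - A. trm N S k) + (\<Sum>k\<in>A. trm N S k)"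
  unfolding Phi_def using sum.subset_diff[OF assms, of "trm N S"] by simp



lemma cu_Un: "cu N S F \<Longrightarrow> cu N S G \<Longrightarrow> cu N S (F \<union> G)"
  unfolding cu_def by blast

lemma cls_disj: "k < N \<Longrightarrow> k \<notin> cls N S i \<Longrightarrow> cls N S k \<inter> cls N S i = {}"
proof (rule ccontr)
  assume k: "k < N" "k \<notin> cls N S i" and "cls N S k \<inter> cls N S i \<noteq> {}"
  then obtain m where m: "m \<in> cls N S k" "m \<in> cls N S i" by blast
  have "cls N S k = cls N S i" using cls_eq[OF m(1)] cls_eq[OF m(2)] by simp
  then show False using cls_self[OF k(1), of S] k(2) by simp
qed

lemma single_case:
  assumes Q: "\<forall>(q,a)\<in>set Q. qvalid N q"
    and S: "S = sat N Q" and S': "S' = {X\<in>S. f X = a}" "S' \<noteq> {}"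
    and i: "i < N" "\<not> dtm S i" and dti: "dtm S' i"
    and tog: "\<forall>X\<in>S. f (flipS (cls N S i) X) = (\<not> f X)"
    and qidx: "\<forall>k<N. \<not> dtm S k \<longrightarrow> k \<notin> cls N S i \<longrightarrow> (\<forall>X\<in>S. f (flipS (cls N S k) X) = f X)"
  shows "Phi N S' \<ge> Phi N S - 1"
proof -
  let ?A = "cls N S i"
  have SS': "S' \<subseteq> S" using S' by auto
  have disjA: "\<forall>k<N. \<not> dtm S k \<longrightarrow> k \<notin> ?A \<longrightarrow> cls N S k \<inter> ?A = {}"
    using cls_disj by blast
  have out: "(\<Sum>k\<in>{..<N} - ?A. trm N S' k) = (\<Sum>k\<in>{..<N} - ?A. trm N S k)"
  proof (rule sum.cong[OF refl])
    fix k assume k: "k \<in> {..<N} - ?A"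
    show "trm N S' k = trm N S k"
      by (rule trm_eq_outside[OF Q S S' cu_cls[OF i] tog subset_refl disjA qidx]) (use k in auto)
  qed
  have in1: "(\<Sum>k\<in>?A. trm N S' k) = 0"
  proof (rule sum.neutral, rule ballI)
    fix m assume "m \<in> ?A"
    then have "eqv S' i m" using eqv_mono[OF SS'] by (auto simp: cls_def)
    then have "dtm S' m" using det_eqv dti by blast
    then show "trm N S' m = 0" by (simp add: trm_def)
  qed
  have in2: "(\<Sum>k\<in>?A. trm N S k) \<le> 1" using sum_cls[OF i] by simp
  show ?thesis using Phi_split[OF cls_sub, of N S' S i] Phi_split[OF cls_sub, of N S S i] out in1 in2
    by linarith
qed

lemma merge_case:
  assumes Q: "\<forall>(q,a)\<in>set Q. qvalid N q"
    and S: "S = sat N Q" and S': "S' = {X\<in>S. f X = a}" "S' \<noteq> {}"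
    and i: "i < N" "\<not> dtm S i" and j: "j < N" "\<not> dtm S j" and ne: "\<not> eqv S i j"
    and eqS': "eqv S' i j"
    and togi: "\<forall>X\<in>S. f (flipS (cls N S i) X) = (\<not> f X)"
    and presij: "\<forall>X\<in>S. f (flipS (cls N S i \<union> cls N S j) X) = f X"
    and qidx: "\<forall>k<N. \<not> dtm S k \<longrightarrow> k \<notin> cls N S i \<union> cls N S j \<longrightarrow> (\<forall>X\<in>S. f (flipS (cls N S k) X) = f X)"
  shows "Phi N S' = (\<Sum>k\<in>{..<N} - (cls N S i \<union> cls N S j). trm N S k) + (if nb N S' i then 1 else 0)"
    and "Phi N S = (\<Sum>k\<in>{..<N} - (cls N S i \<union> cls N S j). trm N S k) + (if nb N S i then 1 else 0) + (if nb N S j then 1 else 0)"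
    and "\<forall>X\<in>S'. nb N S' i \<longleftrightarrow> csum N S i X + csum N S j X \<noteq> 0"
proof -
  let ?A = "cls N S i \<union> cls N S j"
  have SS': "S' \<subseteq> S" using S' by auto
  have lenS: "\<And>X. X \<in> S \<Longrightarrow> length X = N" using S sat_len by blast
  have disjij: "cls N S i \<inter> cls N S j = {}"
  proof (rule ccontr)
    assume "cls N S i \<inter> cls N S j \<noteq> {}"
    then obtain m where "eqv S i m" "eqv S j m" by (auto simp: cls_def)
    then have "eqv S i j" using eqv_trans[OF _ eqv_sym] by blast
    then show False using ne by blast
  qed
  have AN: "?A \<subseteq> {..<N}" using cls_sub by blast
  have GA: "cls N S i \<subseteq> ?A" by blast
  have disjA: "\<forall>k<N. \<not> dtm S k \<longrightarrow> k \<notin> ?A \<longrightarrow> cls N S k \<inter> ?A = {}"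
    using cls_disj by (simp add: Int_Un_distrib)
  have cuA: "cu N S ?A" using cu_Un cu_cls i j by blast
  have presA: "\<And>X. X \<in> S' \<Longrightarrow> flipS ?A X \<in> S'"
    using flip_sat_pres[OF Q, of ?A f] cuA presij S S' by blast
  obtain X0 where X0: "X0 \<in> S'" using S' by blast
  have ndA: "\<not> dtm S' m" if m: "m \<in> ?A" for m
  proof
    assume "dtm S' m"
    moreover have "flipS ?A X0 \<in> S'" using presA X0 by blast
    moreover have "m < length X0" using m AN lenS X0 SS' by auto
    then have "flipS ?A X0 ! m \<noteq> X0 ! m" using m by simp
    ultimately show False using X0 unfolding dtm_def by blast
  qed
  have iA: "i \<in> ?A" using cls_self i by blast
  have eqA: "eqv S' i m" if m: "m \<in> ?A" for m
  proof (cases "m \<in> cls N S i")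
    case True
    then show ?thesis using eqv_mono[OF SS'] by (auto simp: cls_def)
  next
    case False
    then have "eqv S j m" using m by (auto simp: cls_def)
    then have "eqv S' j m" using eqv_mono[OF SS'] by blast
    then show ?thesis using eqv_trans[OF eqS'] by blast
  qed
  have clsA: "cls N S' i = ?A"
  proof
    show "?A \<subseteq> cls N S' i"
    proof
      fix m assume mA: "m \<in> ?A"
      have "eqv S' i m" using eqA[OF mA] .
      moreover have "m < N" using mA AN by blast
      ultimately show "m \<in> cls N S' i" by (simp add: cls_def)
    qed
  next
    show "cls N S' i \<subseteq> ?A"
    proof
      fix l assume l: "l \<in> cls N S' i"
      then have lN: "l < N" and e: "eqv S' i l" by (auto simp: cls_def)
      show "l \<in> ?A"
      proof (rule ccontr)
        assume lA: "l \<notin> ?A"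
        show False
        proof (cases "dtm S l")
          case True
          then have "dtm S' l" using det_mono[OF SS'] by blast
          then have "dtm S' i" using det_eqv[OF _ eqv_sym[OF e]] by blast
          then show False using ndA iA by blast
        next
          case False
          have h: "cls N S' l = cls N S l \<and> \<not> dtm S' l \<and> nb N S' l = nb N S l"
            by (rule outside_facts[OF Q S S' cu_cls[OF i] togi GA disjA qidx lN lA False])
          have "eqv S' l i" using eqv_sym[OF e] .
          then have i1: "i \<in> cls N S' l" using i(1) unfolding cls_def by simp
          have i2: "i \<in> cls N S l" using i1 conjunct1[OF h] by simp
          have "l \<in> cls N S i" by (rule iffD1[OF cls_mem_iff[OF i(1) lN] i2])
          then have "l \<in> ?A" by (rule UnI1)
          with lA show False by contradiction
        qed
      qed
    qed
  qed
  have out: "(\<Sum>k\<in>{..<N} - ?A. trm N S' k) = (\<Sum>k\<in>{..<N} - ?A. trm N S k)"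
  proof (rule sum.cong[OF refl])
    fix k assume k: "k \<in> {..<N} - ?A"
    show "trm N S' k = trm N S k"
      by (rule trm_eq_outside[OF Q S S' cu_cls[OF i] togi GA disjA qidx]) (use k in auto)
  qed
  have ndi: "\<not> dtm S' i" using ndA iA by blast
  have in1: "(\<Sum>k\<in>?A. trm N S' k) = (if nb N S' i then 1 else 0)"
    using sum_cls[OF i(1) ndi] clsA by simp
  have in2: "(\<Sum>k\<in>?A. trm N S k) = (if nb N S i then 1 else 0) + (if nb N S j then 1 else 0)"
    using sum.union_disjoint[OF cls_finite cls_finite disjij, of "trm N S"] sum_cls[OF i] sum_cls[OF j]
    by simp
  show "Phi N S' = (\<Sum>k\<in>{..<N} - ?A. trm N S k) + (if nb N S' i then 1 else 0)"
    using Phi_split[OF AN, of S'] out in1 by simp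
  show "Phi N S = (\<Sum>k\<in>{..<N} - ?A. trm N S k) + (if nb N S i then 1 else 0) + (if nb N S j then 1 else 0)"
    using Phi_split[OF AN, of S] in2 by simp
  show "\<forall>X\<in>S'. nb N S' i \<longleftrightarrow> csum N S i X + csum N S j X \<noteq> 0"
  proof
    fix X assume X: "X \<in> S'"
    have "csum N S' i X = csum N S i X + csum N S j X"
      unfolding csum_def clsA using sum.union_disjoint[OF cls_finite cls_finite disjij] by simp
    then show "nb N S' i \<longleftrightarrow> csum N S i X + csum N S j X \<noteq> 0" using nb_iff[OF X] by simp
  qed
qed



lemma sat_snoc: "sat N (Q @ [(q,a)]) = {X\<in>sat N Q. qans q X = a}"
  unfolding sat_def by auto

lemma qans_flip_bit: "i < length X \<Longrightarrow> qans (QBit i) (flipS F X) = (if i \<in> F then \<not> qans (QBit i) X else qans (QBit i) X)"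
  by simp

lemma qans_flip_xor: "i < length X \<Longrightarrow> j < length X \<Longrightarrow>
   qans (QXor i j) (flipS F X) = (qans (QXor i j) X \<noteq> ((i \<in> F) \<noteq> (j \<in> F)))"
  by auto

lemma card_halves:
  assumes Q: "\<forall>(q,a)\<in>set Q. qvalid N q" and S: "S = sat N Q"
    and G: "cu N S G" "\<forall>X\<in>S. f (flipS G X) = (\<not> f X)"
  shows "card {X\<in>S. f X = False} = card {X\<in>S. f X = True}"
proof -
  have m: "flipS G ` {X\<in>S. f X = b} \<subseteq> {X\<in>S. f X = (\<not> b)}" for b
    using flip_sat_tog[OF Q, of G f] G S by blast
  have inj: "inj_on (flipS G) A" for A
    by (metis flipS_flipS inj_onI)
  have fin: "finite {X\<in>S. f X = b}" for b using sat_finite S by simp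
  have "card {X\<in>S. f X = False} \<le> card {X\<in>S. f X = True}"
    using card_inj_on_le[OF inj m[of False] fin] by simp
  moreover have "card {X\<in>S. f X = True} \<le> card {X\<in>S. f X = False}"
    using card_inj_on_le[OF inj m[of True] fin] by simp
  ultimately show ?thesis by linarith
qed

lemma single_xor:
  assumes Q: "\<forall>(q,a)\<in>set Q. qvalid N q" and S: "S = sat N Q"
    and i: "i < N" "\<not> dtm S i" and j: "j < N" "dtm S j"
    and fdef: "\<forall>X. f X = (X!i \<noteq> X!j)"
    and S': "S' = {X\<in>S. f X = a}" "S' \<noteq> {}"
  shows "Phi N S' \<ge> Phi N S - 1"
proof -
  have lenS: "\<And>X. X \<in> S \<Longrightarrow> length X = N" using S sat_len by blast
  have jni: "j \<notin> cls N S i"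
  proof
    assume "j \<in> cls N S i"
    then have "eqv S j i" using eqv_sym by (simp add: cls_def)
    then show False using det_eqv[OF j(2)] i(2) by blast
  qed
  have iin: "i \<in> cls N S i" by (rule cls_self[OF i(1)])
  have tog: "\<forall>X\<in>S. f (flipS (cls N S i) X) = (\<not> f X)"
  proof
    fix X assume X: "X \<in> S"
    then have "i < length X" "j < length X" using lenS i j by auto
    then show "f (flipS (cls N S i) X) = (\<not> f X)" using fdef iin jni by simp
  qed
  have qidx: "\<forall>k<N. \<not> dtm S k \<longrightarrow> k \<notin> cls N S i \<longrightarrow> (\<forall>X\<in>S. f (flipS (cls N S k) X) = f X)"
  proof (intro allI impI ballI)
    fix k X assume k: "k < N" "\<not> dtm S k" "k \<notin> cls N S i" and X: "X \<in> S"
    have "i \<notin> cls N S k" using cls_mem_iff[OF i(1) k(1)] k(3) by blast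
    moreover have "j \<notin> cls N S k"
    proof
      assume "j \<in> cls N S k"
      then have "eqv S j k" using eqv_sym by (simp add: cls_def)
      then show False using det_eqv[OF j(2)] k(2) by blast
    qed
    moreover have "i < length X" "j < length X" using lenS i j X by auto
    ultimately show "f (flipS (cls N S k) X) = f X" using fdef by simp
  qed
  have dti: "dtm S' i" unfolding dtm_def
  proof (intro ballI)
    fix X Y assume "X \<in> S'" "Y \<in> S'"
    then have "X \<in> S" "Y \<in> S" "f X = a" "f Y = a" using S' by auto
    then have h1: "X ! j = Y ! j" "f X = a" "f Y = a" using j(2) unfolding dtm_def by blast+
    have "(X!i \<noteq> X!j) = (Y!i \<noteq> Y!j)" using h1(2,3) fdef by simp
    then show "X ! i = Y ! i" using h1(1) by blast
  qed
  show ?thesis by (rule single_case[OF Q S S' i dti tog qidx])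
qed



lemma both_nonempty:
  assumes Q: "\<forall>(q,a)\<in>set Q. qvalid N q" and q: "qvalid N q" and S: "S = sat N Q"
    and S0: "S0 = {X\<in>S. qans q X = False}" and S1: "S1 = {X\<in>S. qans q X = True}"
    and ne: "S0 \<noteq> {}" "S1 \<noteq> {}"
  shows "\<exists>G. cu N S G \<and> (\<forall>X\<in>S. qans q (flipS G X) = (\<not> qans q X)) \<and> Phi N S0 + Phi N S1 \<ge> 2 * Phi N S - 3"
proof -
  have lenS: "\<And>X. X \<in> S \<Longrightarrow> length X = N" using S sat_len by blast
  obtain X0 where X0: "X0 \<in> S" "qans q X0 = False" using ne(1) S0 by blast
  obtain X1 where X1: "X1 \<in> S" "qans q X1 = True" using ne(2) S1 by blast
  show ?thesis
  proof (cases q)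
    case (QBit i)
    have i: "i < N" using q QBit by simp
    have ndi: "\<not> dtm S i"
    proof
      assume "dtm S i"
      then have "X0 ! i = X1 ! i" using X0(1) X1(1) unfolding dtm_def by blast
      then show False using X0(2) X1(2) QBit by simp
    qed
    have iin: "i \<in> cls N S i" by (rule cls_self[OF i])
    have tog: "\<forall>X\<in>S. qans q (flipS (cls N S i) X) = (\<not> qans q X)"
    proof
      fix X assume "X \<in> S"
      then have "i < length X" using lenS i by auto
      then show "qans q (flipS (cls N S i) X) = (\<not> qans q X)" using QBit iin by simp
    qed
    have qidx: "\<forall>k<N. \<not> dtm S k \<longrightarrow> k \<notin> cls N S i \<longrightarrow> (\<forall>X\<in>S. qans q (flipS (cls N S k) X) = qans q X)"
    proof (intro allI impI ballI)
      fix k X assume k: "k < N" "\<not> dtm S k" "k \<notin> cls N S i" and X: "X \<in> S"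
      have "i \<notin> cls N S k" using cls_mem_iff[OF i k(1)] k(3) by blast
      moreover have "i < length X" using lenS i X by auto
      ultimately show "qans q (flipS (cls N S k) X) = qans q X" using QBit by simp
    qed
    have dt: "dtm {X\<in>S. qans q X = a} i" for a
      unfolding dtm_def using QBit by auto
    have p0: "Phi N S0 \<ge> Phi N S - 1"
      by (rule single_case[OF Q S S0 ne(1) i ndi _ tog qidx]) (unfold S0, rule dt)
    have p1: "Phi N S1 \<ge> Phi N S - 1"
      by (rule single_case[OF Q S S1 ne(2) i ndi _ tog qidx]) (unfold S1, rule dt)
    show ?thesis using cu_cls[OF i ndi] tog p0 p1 by (intro exI[of _ "cls N S i"]) simp
  next
    case (QXor i j)
    have ij: "i < N" "j < N" using q QXor by auto
    have ne_ij: "\<not> eqv S i j"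
    proof
      assume "eqv S i j"
      then have "(X0!i = X0!j) = (X1!i = X1!j)" using X0(1) X1(1) unfolding eqv_def by blast
      then show False using X0(2) X1(2) QXor by simp
    qed
    have fd: "\<forall>X. qans q X = (X!i \<noteq> X!j)" using QXor by simp
    have fd': "\<forall>X. qans q X = (X!j \<noteq> X!i)" using QXor by auto
    show ?thesis
    proof (cases "dtm S j")
      case dj: True
      have ndi: "\<not> dtm S i" using dj ne_ij det_det_eqv by blast
      have jni: "j \<notin> cls N S i" using ne_ij by (simp add: cls_def)
      have tog: "\<forall>X\<in>S. qans q (flipS (cls N S i) X) = (\<not> qans q X)"
      proof
        fix X assume "X \<in> S"
        then have "i < length X" "j < length X" using lenS ij by auto
        then show "qans q (flipS (cls N S i) X) = (\<not> qans q X)"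
          using QXor cls_self[OF ij(1), of S] jni by simp
      qed
      have p0: "Phi N S0 \<ge> Phi N S - 1" by (rule single_xor[OF Q S ij(1) ndi ij(2) dj fd S0 ne(1)])
      have p1: "Phi N S1 \<ge> Phi N S - 1" by (rule single_xor[OF Q S ij(1) ndi ij(2) dj fd S1 ne(2)])
      show ?thesis using cu_cls[OF ij(1) ndi] tog p0 p1 by (intro exI[of _ "cls N S i"]) simp
    next
      case ndj: False
      show ?thesis
      proof (cases "dtm S i")
        case di: True
        have inj: "i \<notin> cls N S j" using ne_ij eqv_sym by (auto simp: cls_def)
        have tog: "\<forall>X\<in>S. qans q (flipS (cls N S j) X) = (\<not> qans q X)"
        proof
          fix X assume "X \<in> S"
          then have "i < length X" "j < length X" using lenS ij by auto
          then show "qans q (flipS (cls N S j) X) = (\<not> qans q X)"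
            using QXor cls_self[OF ij(2), of S] inj by simp
        qed
        have p0: "Phi N S0 \<ge> Phi N S - 1" by (rule single_xor[OF Q S ij(2) ndj ij(1) di fd' S0 ne(1)])
        have p1: "Phi N S1 \<ge> Phi N S - 1" by (rule single_xor[OF Q S ij(2) ndj ij(1) di fd' S1 ne(2)])
        show ?thesis using cu_cls[OF ij(2) ndj] tog p0 p1 by (intro exI[of _ "cls N S j"]) simp
      next
        case ndi: False
        have jni: "j \<notin> cls N S i" using ne_ij by (simp add: cls_def)
        have inj: "i \<notin> cls N S j" using ne_ij eqv_sym by (auto simp: cls_def)
        have iin: "i \<in> cls N S i" by (rule cls_self[OF ij(1)])
        have jin: "j \<in> cls N S j" by (rule cls_self[OF ij(2)])
        have tog: "\<forall>X\<in>S. qans q (flipS (cls N S i) X) = (\<not> qans q X)"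
        proof
          fix X assume "X \<in> S"
          then have "i < length X" "j < length X" using lenS ij by auto
          then show "qans q (flipS (cls N S i) X) = (\<not> qans q X)" using QXor iin jni by simp
        qed
        have presij: "\<forall>X\<in>S. qans q (flipS (cls N S i \<union> cls N S j) X) = qans q X"
        proof
          fix X assume "X \<in> S"
          then have "i < length X" "j < length X" using lenS ij by auto
          then show "qans q (flipS (cls N S i \<union> cls N S j) X) = qans q X" using QXor iin jin by simp
        qed
        have qidx: "\<forall>k<N. \<not> dtm S k \<longrightarrow> k \<notin> cls N S i \<union> cls N S j \<longrightarrow> (\<forall>X\<in>S. qans q (flipS (cls N S k) X) = qans q X)"
        proof (intro allI impI ballI)
          fix k X assume k: "k < N" "\<not> dtm S k" "k \<notin> cls N S i \<union> cls N S j" and X: "X \<in> S"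
          have "i \<notin> cls N S k" using cls_mem_iff[OF ij(1) k(1)] k(3) by blast
          moreover have "j \<notin> cls N S k" using cls_mem_iff[OF ij(2) k(1)] k(3) by blast
          moreover have "i < length X" "j < length X" using lenS ij X by auto
          ultimately show "qans q (flipS (cls N S k) X) = qans q X" using QXor by simp
        qed
        have eq0: "eqv S0 i j" unfolding eqv_def S0 using QXor by auto
        have eq1: "eqv S1 i j" unfolding eqv_def S1 using QXor by auto
        note m0 = merge_case[OF Q S S0 ne(1) ij(1) ndi ij(2) ndj ne_ij eq0 tog presij qidx]
        note m1 = merge_case[OF Q S S1 ne(2) ij(1) ndi ij(2) ndj ne_ij eq1 tog presij qidx]
        define R where "R = (\<Sum>k\<in>{..<N} - (cls N S i \<union> cls N S j). trm N S k)"
        have X0S0: "X0 \<in> S0" using X0 S0 by simp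
        define Y where "Y = flipS (cls N S i) X0"
        have YS1: "Y \<in> S1" using flip_sat_tog[OF Q, of "cls N S i" "qans q" X0 False] cu_cls[OF ij(1) ndi]
            tog X0 S S1 Y_def by auto
        have YS: "Y \<in> S" using YS1 S1 by simp
        have lenX0: "length X0 = N" using lenS X0(1) by simp
        have disj: "cls N S i \<inter> cls N S j = {}" using cls_disj[OF ij(2) jni] by blast
        have ci: "csum N S i Y = - csum N S i X0"
        proof -
          have "csum N S i Y = (\<Sum>m\<in>cls N S i. - sg (X0!m))"
            unfolding csum_def Y_def
          proof (rule sum.cong[OF refl])
            fix m assume m: "m \<in> cls N S i"
            then have "m < length X0" using cls_sub lenX0 by fastforce
            then show "sg (flipS (cls N S i) X0 ! m) = - sg (X0 ! m)" using m by (simp add: sg_def)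
          qed
          then show ?thesis by (simp add: csum_def sum_negf)
        qed
        have cj: "csum N S j Y = csum N S j X0"
          unfolding csum_def Y_def
        proof (rule sum.cong[OF refl])
          fix m assume m: "m \<in> cls N S j"
          then have "m < length X0" using cls_sub lenX0 by fastforce
          moreover have "m \<notin> cls N S i" using m disj by blast
          ultimately show "sg (flipS (cls N S i) X0 ! m) = sg (X0 ! m)" by simp
        qed
        have n0: "nb N S0 i \<longleftrightarrow> csum N S i X0 + csum N S j X0 \<noteq> 0" using m0(3) X0S0 by blast
        have n1: "nb N S1 i \<longleftrightarrow> - csum N S i X0 + csum N S j X0 \<noteq> 0" using m1(3) YS1 ci cj by auto
        have nbi: "nb N S i \<longleftrightarrow> csum N S i X0 \<noteq> 0" using nb_iff[OF X0(1)] .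
        have nbj: "nb N S j \<longleftrightarrow> csum N S j X0 \<noteq> 0" using nb_iff[OF X0(1)] .
        have key: "(if nb N S0 i then 1 else 0) + (if nb N S1 i then 1 else 0) \<ge>
                   2 * ((if nb N S i then 1 else 0) + (if nb N S j then 1 else 0)) - (3::real)"
          using n0 n1 nbi nbj by auto
        have "Phi N S0 + Phi N S1 \<ge> 2 * Phi N S - 3"
        proof -
          have gen: "\<And>P0 P1 PS x0 x1 xi xj::real. P0 = R + x0 \<Longrightarrow> P1 = R + x1 \<Longrightarrow> PS = R + xi + xj
              \<Longrightarrow> 2*(xi+xj) - 3 \<le> x0 + x1 \<Longrightarrow> 2*PS - 3 \<le> P0 + P1" by (smt (verit))
          show ?thesis
            using gen[OF m0(1)[folded R_def] m1(1)[folded R_def] m0(2)[folded R_def] key] .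
        qed
        then show ?thesis using cu_cls[OF ij(1) ndi] tog by (intro exI[of _ "cls N S i"]) simp
      qed
    qed
  qed
qed

lemma step:
  assumes Q: "\<forall>(q,a)\<in>set Q. qvalid N q" and q: "qvalid N q"
  shows "real (card (sat N (Q @ [(q,False)]))) * Phi N (sat N (Q @ [(q,False)]))
       + real (card (sat N (Q @ [(q,True)]))) * Phi N (sat N (Q @ [(q,True)]))
       \<ge> real (card (sat N Q)) * (Phi N (sat N Q) - 3/2)"
proof -
  define S where "S = sat N Q"
  define S0 where "S0 = {X\<in>S. qans q X = False}"
  define S1 where "S1 = {X\<in>S. qans q X = True}"
  have e0: "sat N (Q @ [(q,False)]) = S0" unfolding S0_def S_def sat_snoc ..
  have e1: "sat N (Q @ [(q,True)]) = S1" unfolding S1_def S_def sat_snoc ..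
  have fin: "finite S" unfolding S_def by (rule sat_finite)
  have un: "S = S0 \<union> S1" and dj: "S0 \<inter> S1 = {}" unfolding S0_def S1_def by auto
  have cS: "card S = card S0 + card S1"
    using card_Un_disjoint[of S0 S1] fin un dj by (metis finite_Un)
  have P: "Phi N S \<ge> 0" "Phi N S0 \<ge> 0" "Phi N S1 \<ge> 0" by (rule Phi_nonneg)+
  show ?thesis unfolding e0 e1 S_def[symmetric]
  proof (cases "S0 = {} \<or> S1 = {}")
    case True
    then show "real (card S0) * Phi N S0 + real (card S1) * Phi N S1 \<ge> real (card S) * (Phi N S - 3/2)"
    proof
      assume "S0 = {}"
      then have "S1 = S" using un by simp
      then show ?thesis using \<open>S0 = {}\<close> P by (simp add: algebra_simps)
    next
      assume "S1 = {}"
      then have "S0 = S" using un by simp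
      then show ?thesis using \<open>S1 = {}\<close> P by (simp add: algebra_simps)
    qed
  next
    case False
    then obtain G where G: "cu N S G" "\<forall>X\<in>S. qans q (flipS G X) = (\<not> qans q X)"
      and ph: "Phi N S0 + Phi N S1 \<ge> 2 * Phi N S - 3"
      using both_nonempty[OF Q q S_def S0_def S1_def] by blast
    have c: "card S0 = card S1" unfolding S0_def S1_def by (rule card_halves[OF Q S_def G])
    have "real (card S0) * Phi N S0 + real (card S1) * Phi N S1 = real (card S0) * (Phi N S0 + Phi N S1)"
      using c by (simp add: algebra_simps)
    also have "\<dots> \<ge> real (card S0) * (2 * Phi N S - 3)" using ph by (simp add: mult_left_mono)
    finally show "real (card S0) * Phi N S0 + real (card S1) * Phi N S1 \<ge> real (card S) * (Phi N S - 3/2)"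
      using cS c by (simp add: algebra_simps)
  qed
qed



lemma partition_sum:
  fixes h :: "nat \<Rightarrow> real"
  assumes fin: "finite U" and self: "\<And>k. k \<in> U \<Longrightarrow> k \<in> c k" and sub: "\<And>k. k \<in> U \<Longrightarrow> c k \<subseteq> U"
    and eq: "\<And>k m. k \<in> U \<Longrightarrow> m \<in> c k \<Longrightarrow> c m = c k"
  shows "(\<Sum>k\<in>U. h k) = (\<Sum>k\<in>U. (\<Sum>m\<in>c k. h m) / real (card (c k)))"
proof -
  have "(\<Sum>k\<in>U. (\<Sum>m\<in>c k. h m) / real (card (c k)))
      = (\<Sum>k\<in>U. \<Sum>m\<in>U. (if m \<in> c k then h m / real (card (c k)) else 0))"
  proof (rule sum.cong[OF refl])
    fix k assume k: "k \<in> U"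
    have "(\<Sum>m\<in>c k. h m) / real (card (c k)) = (\<Sum>m\<in>c k. h m / real (card (c k)))"
      by (simp add: sum_divide_distrib)
    also have "\<dots> = (\<Sum>m\<in>U. (if m \<in> c k then h m / real (card (c k)) else 0))"
      using sum.inter_restrict[OF fin, of "\<lambda>m. h m / real (card (c k))" "c k"] sub[OF k]
      by (simp add: Int_absorb1 inf_commute)
    finally show "(\<Sum>m\<in>c k. h m) / real (card (c k)) = (\<Sum>m\<in>U. (if m \<in> c k then h m / real (card (c k)) else 0))" .
  qed
  also have "\<dots> = (\<Sum>m\<in>U. \<Sum>k\<in>U. (if m \<in> c k then h m / real (card (c k)) else 0))"
    by (rule sum.swap)
  also have "\<dots> = (\<Sum>m\<in>U. h m)"
  proof (rule sum.cong[OF refl])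
    fix m assume m: "m \<in> U"
    have cm: "c m \<subseteq> U" using sub[OF m] .
    have finm: "finite (c m)" using cm fin finite_subset by blast
    have pos: "card (c m) > 0" using self[OF m] finm card_gt_0_iff by blast
    have "(\<Sum>k\<in>U. (if m \<in> c k then h m / real (card (c k)) else 0))
        = (\<Sum>k\<in>U. (if k \<in> c m then h m / real (card (c m)) else 0))"
    proof (rule sum.cong[OF refl])
      fix k assume k: "k \<in> U"
      have "m \<in> c k \<longleftrightarrow> k \<in> c m"
      proof
        assume "m \<in> c k" then have "c m = c k" using eq[OF k] by blast
        then show "k \<in> c m" using self[OF k] by simp
      next
        assume "k \<in> c m" then have "c k = c m" using eq[OF m] by blast
        then show "m \<in> c k" using self[OF m] by simp
      qed
      moreover have "m \<in> c k \<Longrightarrow> c k = c m" using eq[OF k] by blast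
      ultimately show "(if m \<in> c k then h m / real (card (c k)) else 0) = (if k \<in> c m then h m / real (card (c m)) else 0)"
        by auto
    qed
    also have "\<dots> = (\<Sum>k\<in>c m. h m / real (card (c m)))"
      using sum.inter_restrict[OF fin, of "\<lambda>k. h m / real (card (c m))" "c m"] cm
      by (simp add: Int_absorb1 inf_commute)
    also have "\<dots> = h m" using pos by simp
    finally show "(\<Sum>k\<in>U. (if m \<in> c k then h m / real (card (c k)) else 0)) = h m" .
  qed
  finally show ?thesis by simp
qed



definition sr :: "bool \<Rightarrow> real" where "sr b = (if b then 1 else -1)"

lemma sr_sg: "sr b = real_of_int (sg b)" by (simp add: sr_def sg_def)

lemma csum_real: "real_of_int (csum N S k X) = (\<Sum>m\<in>cls N S k. sr (X!m))"
  by (simp add: csum_def sr_sg)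

lemma leaf_bound:
  assumes Q: "\<forall>(q,a)\<in>set Q. qvalid N q" and S: "S = sat N Q"
    and mono: "\<forall>X\<in>S. majority X = b"
  shows "(\<Sum>X\<in>S. \<bar>\<Sum>k<N. sr (X!k)\<bar>) \<ge> real (card S) * Phi N S"
proof -
  define \<sigma> where "\<sigma> = (if b then 1 else -1::real)"
  have sig: "\<sigma> * \<sigma> = 1" "\<bar>\<sigma>\<bar> = 1" unfolding \<sigma>_def by auto
  have lenS: "\<And>X. X \<in> S \<Longrightarrow> length X = N" using S sat_len by blast
  define s where "s X = (\<Sum>k<N. sr (X!k))" for X
  have sgn: "\<sigma> * s X \<ge> 0" if X: "X \<in> S" for X
  proof -
    have "s X = real (length (filter id X)) - real (length (filter Not X))"
    proof -
      have "\<And>Y. (\<Sum>k<length Y. sr (Y!k)) = real (length (filter id Y)) - real (length (filter Not Y))"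
      proof -
        fix Y :: "bool list"
        show "(\<Sum>k<length Y. sr (Y!k)) = real (length (filter id Y)) - real (length (filter Not Y))"
        proof (induction Y)
          case Nil then show ?case by simp
        next
          case (Cons y Y)
          have "(\<Sum>k<length (y#Y). sr ((y#Y)!k)) = sr y + (\<Sum>k<length Y. sr (Y!k))"
            unfolding length_Cons sum.lessThan_Suc_shift by simp
          then show ?case using Cons by (simp add: sr_def)
        qed
      qed
      then show ?thesis unfolding s_def using lenS[OF X] by metis
    qed
    moreover have "majority X = b" using mono X by blast
    ultimately show ?thesis unfolding \<sigma>_def majority_def by auto
  qed
  define U where "U = {k. k < N \<and> \<not> dtm S k}"
  have UN: "U \<subseteq> {..<N}" unfolding U_def by auto
  have finU: "finite U" using UN finite_subset by blast
  have clsU: "cls N S k \<subseteq> U" if "k \<in> U" for k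
    using that cls_undet[of _ N S k] unfolding U_def cls_def by blast
  have cuU: "cu N S U"
    unfolding cu_def
  proof (intro conjI ballI allI impI)
    show "U \<subseteq> {..<N}" by (rule UN)
  next
    fix i assume "i \<in> U" then show "\<not> dtm S i" by (simp add: U_def)
  next
    fix i j assume "i \<in> U" "j < N" "eqv S i j"
    then have "j \<in> cls N S i" by (simp add: cls_def)
    then show "j \<in> U" using clsU \<open>i \<in> U\<close> by blast
  qed
  define D where "D X = (\<Sum>k\<in>{..<N} - U. sr (X!k))" for X
  have s_split: "s X = D X + (\<Sum>k\<in>U. sr (X!k))" for X
    unfolding s_def D_def using sum.subset_diff[OF UN, of "\<lambda>k. sr (X!k)"] by simp
  have Phi_U: "Phi N S = (\<Sum>k\<in>U. trm N S k)"
  proof -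
    have "Phi N S = (\<Sum>k\<in>{..<N} - U. trm N S k) + (\<Sum>k\<in>U. trm N S k)" by (rule Phi_split[OF UN])
    moreover have "(\<Sum>k\<in>{..<N} - U. trm N S k) = 0"
      by (rule sum.neutral) (auto simp: U_def trm_def)
    ultimately show ?thesis by simp
  qed
  have keyD: "\<sigma> * D X \<ge> Phi N S" if X: "X \<in> S" for X
  proof -
    define Gs where "Gs = {k\<in>U. \<sigma> * real_of_int (csum N S k X) > 0}"
    have csum_cls: "csum N S m X = csum N S k X" if "m \<in> cls N S k" for m k
      unfolding csum_def using cls_eq[OF that] by simp
    have GsU: "Gs \<subseteq> U" unfolding Gs_def by blast
    have Gs_cls: "m \<in> Gs \<longleftrightarrow> k \<in> Gs" if k: "k \<in> U" and m: "m \<in> cls N S k" for k m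
    proof -
      have "m \<in> U" using clsU k m by blast
      moreover have "csum N S m X = csum N S k X" using csum_cls[OF m] .
      ultimately show ?thesis using k unfolding Gs_def by auto
    qed
    have cuG: "cu N S Gs"
      unfolding cu_def
    proof (intro conjI ballI allI impI)
      show "Gs \<subseteq> {..<N}" using GsU UN by blast
    next
      fix i assume "i \<in> Gs" then show "\<not> dtm S i" using GsU by (auto simp: U_def)
    next
      fix i j assume ij: "i \<in> Gs" "j < N" "eqv S i j"
      then have "j \<in> cls N S i" by (simp add: cls_def)
      then show "j \<in> Gs" using Gs_cls[of i j] ij GsU by blast
    qed
    define Xe where "Xe = flipS Gs X"
    have XeS: "Xe \<in> S" unfolding Xe_def S using sat_flip[OF Q cuG[unfolded S]] X S by blast
    have lenX: "length X = N" using lenS X .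
    have DXe: "D Xe = D X" unfolding D_def Xe_def
      by (rule sum.cong[OF refl]) (use GsU lenX in auto)
    have inner: "(\<Sum>m\<in>cls N S k. \<sigma> * sr (Xe!m)) = - \<bar>real_of_int (csum N S k X)\<bar>" if k: "k \<in> U" for k
    proof (cases "k \<in> Gs")
      case True
      have "(\<Sum>m\<in>cls N S k. \<sigma> * sr (Xe!m)) = (\<Sum>m\<in>cls N S k. - (\<sigma> * sr (X!m)))"
      proof (rule sum.cong[OF refl])
        fix m assume m: "m \<in> cls N S k"
        have "m \<in> Gs" using Gs_cls[OF k m] True by blast
        moreover have "m < length X" using m cls_sub lenX by fastforce
        ultimately show "\<sigma> * sr (Xe!m) = - (\<sigma> * sr (X!m))" unfolding Xe_def by (simp add: sr_def)
      qed
      also have "\<dots> = - (\<sigma> * real_of_int (csum N S k X))"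
        by (simp add: csum_real sum_negf sum_distrib_left)
      also have "\<dots> = - \<bar>real_of_int (csum N S k X)\<bar>"
      proof -
        have "\<sigma> * real_of_int (csum N S k X) > 0" using True unfolding Gs_def by blast
        then have "\<bar>\<sigma> * real_of_int (csum N S k X)\<bar> = \<sigma> * real_of_int (csum N S k X)" by simp
        then show ?thesis using sig by (simp add: abs_mult)
      qed
      finally show ?thesis .
    next
      case False
      have "(\<Sum>m\<in>cls N S k. \<sigma> * sr (Xe!m)) = (\<Sum>m\<in>cls N S k. \<sigma> * sr (X!m))"
      proof (rule sum.cong[OF refl])
        fix m assume m: "m \<in> cls N S k"
        have "m \<notin> Gs" using Gs_cls[OF k m] False by blast
        moreover have "m < length X" using m cls_sub lenX by fastforce
        ultimately show "\<sigma> * sr (Xe!m) = \<sigma> * sr (X!m)" unfolding Xe_def by simp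
      qed
      also have "\<dots> = \<sigma> * real_of_int (csum N S k X)"
        by (simp add: csum_real sum_distrib_left)
      also have "\<dots> = - \<bar>real_of_int (csum N S k X)\<bar>"
      proof -
        have "\<sigma> * real_of_int (csum N S k X) \<le> 0" using False k unfolding Gs_def by auto
        then have "\<bar>\<sigma> * real_of_int (csum N S k X)\<bar> = - (\<sigma> * real_of_int (csum N S k X))" by simp
        then show ?thesis using sig by (simp add: abs_mult)
      qed
      finally show ?thesis .
    qed
    have part: "(\<Sum>k\<in>U. \<sigma> * sr (Xe!k)) = (\<Sum>k\<in>U. (\<Sum>m\<in>cls N S k. \<sigma> * sr (Xe!m)) / real (card (cls N S k)))"
    proof (rule partition_sum[OF finU])
      fix k assume "k \<in> U" then show "k \<in> cls N S k" by (simp add: U_def cls_self)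
    next
      fix k assume "k \<in> U" then show "cls N S k \<subseteq> U" by (rule clsU)
    next
      fix k m assume "k \<in> U" "m \<in> cls N S k" then show "cls N S m = cls N S k" by (simp add: cls_eq)
    qed
    have le: "(\<Sum>m\<in>cls N S k. \<sigma> * sr (Xe!m)) / real (card (cls N S k)) \<le> - trm N S k" if k: "k \<in> U" for k
    proof -
      have kN: "k < N" and nd: "\<not> dtm S k" using k by (auto simp: U_def)
      have cpos: "real (card (cls N S k)) > 0" using cls_card_pos[OF kN] by simp
      show ?thesis
      proof (cases "nb N S k")
        case True
        then have "csum N S k X \<noteq> 0" using nb_iff[OF X] by blast
        then have "\<bar>real_of_int (csum N S k X)\<bar> \<ge> 1" by linarith
        then have "- \<bar>real_of_int (csum N S k X)\<bar> / real (card (cls N S k)) \<le> - 1 / real (card (cls N S k))"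
          using cpos by (simp add: divide_right_mono)
        then show ?thesis using inner[OF k] True nd by (simp add: trm_def)
      next
        case False
        have "- \<bar>real_of_int (csum N S k X)\<bar> / real (card (cls N S k)) \<le> 0" using cpos by simp
        then show ?thesis using inner[OF k] False by (simp add: trm_def)
      qed
    qed
    have "(\<Sum>k\<in>U. \<sigma> * sr (Xe!k)) \<le> (\<Sum>k\<in>U. - trm N S k)"
      unfolding part by (rule sum_mono) (rule le)
    then have A: "(\<Sum>k\<in>U. \<sigma> * sr (Xe!k)) \<le> - Phi N S" unfolding Phi_U by (simp add: sum_negf)
    have "0 \<le> \<sigma> * s Xe" using sgn[OF XeS] .
    also have "\<dots> = \<sigma> * D X + (\<Sum>k\<in>U. \<sigma> * sr (Xe!k))"
      unfolding s_split DXe by (simp add: algebra_simps sum_distrib_left)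
    finally show ?thesis using A by linarith
  qed
  define R where "R = flipS U"
  have RS: "R X \<in> S" if "X \<in> S" for X unfolding R_def S using sat_flip[OF Q cuU[unfolded S]] that S by blast
  have sR: "s X + s (R X) = 2 * D X" if X: "X \<in> S" for X
  proof -
    have lenX: "length X = N" using lenS X .
    have DR: "D (R X) = D X" unfolding D_def R_def
      by (rule sum.cong[OF refl]) (use lenX in auto)
    have UR: "(\<Sum>k\<in>U. sr (R X ! k)) = - (\<Sum>k\<in>U. sr (X ! k))"
      unfolding R_def sum_negf[symmetric]
      by (rule sum.cong[OF refl]) (use UN lenX in \<open>auto simp: sr_def\<close>)
    show ?thesis using s_split[of X] s_split[of "R X"] DR UR by simp
  qed
  have bij: "bij_betw R S S"
  proof (rule bij_betw_byWitness[where f' = R])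
    show "\<forall>a\<in>S. R (R a) = a" unfolding R_def by simp
    show "\<forall>a\<in>S. R (R a) = a" unfolding R_def by simp
    show "R ` S \<subseteq> S" using RS by blast
    show "R ` S \<subseteq> S" using RS by blast
  qed
  have sumR: "(\<Sum>X\<in>S. \<sigma> * s (R X)) = (\<Sum>X\<in>S. \<sigma> * s X)"
    using sum.reindex_bij_betw[OF bij, of "\<lambda>X. \<sigma> * s X"] by simp
  have "2 * (\<Sum>X\<in>S. \<sigma> * s X) = (\<Sum>X\<in>S. \<sigma> * s X + \<sigma> * s (R X))"
    using sumR by (simp add: sum.distrib)
  also have "\<dots> = (\<Sum>X\<in>S. 2 * (\<sigma> * D X))"
  proof (rule sum.cong[OF refl])
    fix X assume X: "X \<in> S"
    have "\<sigma> * s X + \<sigma> * s (R X) = \<sigma> * (s X + s (R X))" by (simp add: algebra_simps)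
    also have "\<dots> = 2 * (\<sigma> * D X)" using sR[OF X] by simp
    finally show "\<sigma> * s X + \<sigma> * s (R X) = 2 * (\<sigma> * D X)" .
  qed
  also have "\<dots> \<ge> (\<Sum>X\<in>S. 2 * Phi N S)"
    by (rule sum_mono) (simp add: keyD)
  finally have "(\<Sum>X\<in>S. \<sigma> * s X) \<ge> real (card S) * Phi N S" by simp
  moreover have "(\<Sum>X\<in>S. \<sigma> * s X) \<le> (\<Sum>X\<in>S. \<bar>s X\<bar>)"
  proof (rule sum_mono)
    fix X assume "X \<in> S"
    have "\<sigma> * s X \<le> \<bar>\<sigma> * s X\<bar>" by simp
    then show "\<sigma> * s X \<le> \<bar>s X\<bar>" using sig by (simp add: abs_mult)
  qed
  ultimately show ?thesis unfolding s_def by linarith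
qed



lemma sr_sum_list: "(\<Sum>k<length X. sr (X!k)) = sum_list (map sr X)"
proof (induction X)
  case Nil then show ?case by simp
next
  case (Cons y Y)
  have "(\<Sum>k<length (y#Y). sr ((y#Y)!k)) = sr y + (\<Sum>k<length Y. sr (Y!k))"
    unfolding length_Cons sum.lessThan_Suc_shift by simp
  then show ?case using Cons by simp
qed

lemma lists_Suc: "{X::bool list. length X = Suc n} = Cons True ` {X. length X = n} \<union> Cons False ` {X. length X = n}"
proof
  show "{X::bool list. length X = Suc n} \<subseteq> Cons True ` {X. length X = n} \<union> Cons False ` {X. length X = n}"
  proof
    fix X :: "bool list" assume "X \<in> {X. length X = Suc n}"
    then obtain b Y where "X = b#Y" "length Y = n" by (auto simp: length_Suc_conv)
    then show "X \<in> Cons True ` {X. length X = n} \<union> Cons False ` {X. length X = n}" by (cases b) auto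
  qed
qed auto

lemma lists_finite: "finite {X::bool list. length X = n}"
  using finite_lists_length_eq[of "UNIV::bool set" n] by simp

lemma lists_card: "card {X::bool list. length X = n} = 2 ^ n"
  using card_lists_length_eq[of "UNIV::bool set" n] by simp

lemma sum_lists_Suc:
  fixes f :: "bool list \<Rightarrow> real"
  shows "(\<Sum>X\<in>{X. length X = Suc n}. f X) = (\<Sum>X\<in>{X. length X = n}. f (True#X) + f (False#X))"
proof -
  let ?L = "{X::bool list. length X = n}"
  have d: "Cons True ` ?L \<inter> Cons False ` ?L = {}" by auto
  have "(\<Sum>X\<in>{X. length X = Suc n}. f X) = (\<Sum>X\<in>Cons True ` ?L. f X) + (\<Sum>X\<in>Cons False ` ?L. f X)"
    unfolding lists_Suc by (rule sum.union_disjoint) (use lists_finite d in auto)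
  also have "\<dots> = (\<Sum>X\<in>?L. f (True#X)) + (\<Sum>X\<in>?L. f (False#X))"
    by (simp add: sum.reindex)
  finally show ?thesis by (simp add: sum.distrib)
qed

lemma moment2: "(\<Sum>X\<in>{X::bool list. length X = n}. (sum_list (map sr X))^2) = real n * 2^n"
proof (induction n)
  case 0
  have "{X::bool list. length X = 0} = {[]}" by auto
  then show ?case by simp
next
  case (Suc n)
  have "(\<Sum>X\<in>{X::bool list. length X = Suc n}. (sum_list (map sr X))^2)
      = (\<Sum>X\<in>{X::bool list. length X = n}. 2 * (sum_list (map sr X))^2 + 2)"
    unfolding sum_lists_Suc by (rule sum.cong[OF refl]) (simp add: sr_def power2_eq_square algebra_simps)
  also have "\<dots> = 2 * (real n * 2^n) + 2 * 2^n"
    using Suc by (simp add: sum.distrib sum_distrib_left[symmetric] lists_card)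
  finally show ?case by (simp add: algebra_simps)
qed

lemma abs_sum_bound:
  assumes N: "N \<ge> 1"
  shows "(\<Sum>X\<in>{X::bool list. length X = N}. \<bar>sum_list (map sr X)\<bar>) \<le> sqrt (real N) * 2^N"
proof -
  have sN: "sqrt (real N) > 0" using N by simp
  have sq: "sqrt (real N) * sqrt (real N) = real N" by simp
  have pw: "\<bar>s\<bar> \<le> (s^2 + real N) / (2 * sqrt (real N))" for s :: real
  proof -
    have "0 \<le> (\<bar>s\<bar> - sqrt (real N))^2" by simp
    then have "2 * \<bar>s\<bar> * sqrt (real N) \<le> s^2 + real N"
      using sq by (simp add: power2_eq_square algebra_simps)
    then show ?thesis using sN by (simp add: field_simps)
  qed
  have "(\<Sum>X\<in>{X::bool list. length X = N}. \<bar>sum_list (map sr X)\<bar>)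
      \<le> (\<Sum>X\<in>{X::bool list. length X = N}. ((sum_list (map sr X))^2 + real N) / (2 * sqrt (real N)))"
    by (rule sum_mono) (rule pw)
  also have "\<dots> = ((\<Sum>X\<in>{X::bool list. length X = N}. (sum_list (map sr X))^2) + real N * 2^N) / (2 * sqrt (real N))"
    by (simp add: sum_divide_distrib[symmetric] sum.distrib lists_card)
  also have "\<dots> = (real N * 2^N) / sqrt (real N)" unfolding moment2 using sN by (simp add: field_simps)
  also have "\<dots> = sqrt (real N) * 2^N" using sN sq by (simp add: field_simps)
  finally show ?thesis .
qed

definition Fv :: "nat \<Rightarrow> xtree \<Rightarrow> bool list \<Rightarrow> real" where
  "Fv N t X = (if run t X = None then real N else \<bar>\<Sum>k<N. sr (X!k)\<bar>)"

lemma tree_bound: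
  assumes "valid_tree N t" "\<forall>(q,a)\<in>set Q. qvalid N q"
    "\<forall>X\<in>sat N Q. run t X = Some (majority X) \<or> run t X = None"
  shows "(\<Sum>X\<in>sat N Q. real (nqueries t X) + Fv N t X) \<ge> real (card (sat N Q)) * (2/3) * Phi N (sat N Q)"
  using assms
proof (induction t arbitrary: Q)
  case (Leaf out)
  let ?S = "sat N Q"
  show ?case
  proof (cases out)
    case None
    have "(\<Sum>X\<in>?S. real (nqueries (Leaf out) X) + Fv N (Leaf out) X) = real (card ?S) * real N"
      using None by (simp add: Fv_def)
    moreover have "(2/3) * Phi N ?S \<le> real N" using Phi_le[of N ?S] Phi_nonneg[of N ?S] by linarith
    ultimately show ?thesis by (simp add: mult_left_mono mult.assoc)
  next
    case (Some b)
    have mono: "\<forall>X\<in>?S. majority X = b" using Leaf.prems(3) Some by auto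
    have "(\<Sum>X\<in>?S. real (nqueries (Leaf out) X) + Fv N (Leaf out) X) = (\<Sum>X\<in>?S. \<bar>\<Sum>k<N. sr (X!k)\<bar>)"
      using Some by (simp add: Fv_def)
    moreover have "(\<Sum>X\<in>?S. \<bar>\<Sum>k<N. sr (X!k)\<bar>) \<ge> real (card ?S) * Phi N ?S"
      by (rule leaf_bound[OF Leaf.prems(2) refl mono])
    moreover have "real (card ?S) * (2/3) * Phi N ?S \<le> real (card ?S) * Phi N ?S"
      using Phi_nonneg[of N ?S] by (simp add: mult_left_mono)
    ultimately show ?thesis by linarith
  qed
next
  case (Node q l r)
  let ?S = "sat N Q"
  let ?SF = "sat N (Q @ [(q,False)])"
  let ?ST = "sat N (Q @ [(q,True)])"
  have vq: "qvalid N q" and vl: "valid_tree N l" and vr: "valid_tree N r" using Node.prems(1) by auto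
  have Q0: "\<forall>(q',a)\<in>set (Q @ [(q,False)]). qvalid N q'" using Node.prems(2) vq by auto
  have Q1: "\<forall>(q',a)\<in>set (Q @ [(q,True)]). qvalid N q'" using Node.prems(2) vq by auto
  have e0: "?SF = {X\<in>?S. qans q X = False}" by (rule sat_snoc)
  have e1: "?ST = {X\<in>?S. qans q X = True}" by (rule sat_snoc)
  have z0: "\<forall>X\<in>?SF. run l X = Some (majority X) \<or> run l X = None"
    using Node.prems(3) e0 by auto
  have z1: "\<forall>X\<in>?ST. run r X = Some (majority X) \<or> run r X = None"
    using Node.prems(3) e1 by auto
  have IH0: "(\<Sum>X\<in>?SF. real (nqueries l X) + Fv N l X) \<ge> real (card ?SF) * (2/3) * Phi N ?SF"
    by (rule Node.IH(1)[OF vl Q0 z0])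
  have IH1: "(\<Sum>X\<in>?ST. real (nqueries r X) + Fv N r X) \<ge> real (card ?ST) * (2/3) * Phi N ?ST"
    by (rule Node.IH(2)[OF vr Q1 z1])
  have fin: "finite ?S" by (rule sat_finite)
  have un: "?S = ?SF \<union> ?ST" and dj: "?SF \<inter> ?ST = {}" unfolding e0 e1 by auto
  have fin0: "finite ?SF" and fin1: "finite ?ST" by (rule sat_finite)+
  have cS: "card ?S = card ?SF + card ?ST" using card_Un_disjoint[OF fin0 fin1 dj] un by simp
  have "(\<Sum>X\<in>?S. real (nqueries (Node q l r) X) + Fv N (Node q l r) X)
      = (\<Sum>X\<in>?SF. real (nqueries (Node q l r) X) + Fv N (Node q l r) X)
      + (\<Sum>X\<in>?ST. real (nqueries (Node q l r) X) + Fv N (Node q l r) X)"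
    using sum.union_disjoint[OF fin0 fin1 dj] un by simp
  also have "(\<Sum>X\<in>?SF. real (nqueries (Node q l r) X) + Fv N (Node q l r) X)
      = (\<Sum>X\<in>?SF. 1 + (real (nqueries l X) + Fv N l X))"
    by (rule sum.cong[OF refl]) (simp add: e0 Fv_def)
  also have "(\<Sum>X\<in>?ST. real (nqueries (Node q l r) X) + Fv N (Node q l r) X)
      = (\<Sum>X\<in>?ST. 1 + (real (nqueries r X) + Fv N r X))"
    by (rule sum.cong[OF refl]) (simp add: e1 Fv_def)
  finally have eq: "(\<Sum>X\<in>?S. real (nqueries (Node q l r) X) + Fv N (Node q l r) X)
      = real (card ?S) + (\<Sum>X\<in>?SF. real (nqueries l X) + Fv N l X) + (\<Sum>X\<in>?ST. real (nqueries r X) + Fv N r X)"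
    using cS by (simp add: sum.distrib)
  have st: "real (card ?SF) * Phi N ?SF + real (card ?ST) * Phi N ?ST \<ge> real (card ?S) * (Phi N ?S - 3/2)"
    by (rule step[OF Node.prems(2) vq])
  show ?case using eq IH0 IH1 st by (simp add: algebra_simps)
qed



lemma Phi_full:
  "Phi N {X::bool list. length X = N} = real N"
proof -
  let ?L = "{X::bool list. length X = N}"
  have "trm N ?L k = 1" if k: "k < N" for k
  proof -
    define X0 where "X0 = replicate N False"
    define X1 where "X1 = X0[k := True]"
    have X0L: "X0 \<in> ?L" and X1L: "X1 \<in> ?L" unfolding X0_def X1_def by auto
    have X0k: "X0 ! k = False" and X1k: "X1 ! k = True" using k unfolding X0_def X1_def by auto
    have nd: "\<not> dtm ?L k"
    proof
      assume "dtm ?L k"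
      then have "X0 ! k = X1 ! k" using X0L X1L unfolding dtm_def by blast
      then show False using X0k X1k by simp
    qed
    have cl: "cls N ?L k = {k}"
    proof
      show "cls N ?L k \<subseteq> {k}"
      proof
        fix j assume j: "j \<in> cls N ?L k"
        then have jN: "j < N" and e: "eqv ?L k j" by (auto simp: cls_def)
        show "j \<in> {k}"
        proof (rule ccontr)
          assume "j \<notin> {k}"
          then have jk: "j \<noteq> k" by simp
          have "X0 ! j = False" "X1 ! j = False" using jN jk unfolding X1_def X0_def by auto
          moreover have "(X0!k = X0!j) = (X1!k = X1!j)" using e X0L X1L unfolding eqv_def by blast
          ultimately show False using X0k X1k by simp
        qed
      qed
    next
      show "{k} \<subseteq> cls N ?L k" using cls_self[OF k] by simp
    qed
    have "csum N ?L k X0 = -1" unfolding csum_def cl using X0k by (simp add: sg_def)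
    then have "nb N ?L k" using nb_iff[OF X0L] by simp
    then show ?thesis using nd cl by (simp add: trm_def)
  qed
  then show ?thesis unfolding Phi_def by simp
qed

lemma sat_Nil: "sat N [] = {X. length X = N}" by (simp add: sat_def)

lemma real_card_filter:
  assumes "finite L"
  shows "real (card {X\<in>L. P X}) = (\<Sum>X\<in>L. (if P X then 1 else 0))"
  using sum.inter_filter[OF assms, of "\<lambda>_. (1::real)" P] by simp

theorem mainTheorem14:
  shows "\<exists>c::real. \<forall>N::nat. \<forall>eps::real. \<forall>T::xtree pmf.
     N \<ge> 1 \<longrightarrow> 0 \<le> eps \<longrightarrow> eps \<le> 1 \<longrightarrow> rtree_on N T \<longrightarrow> zero_sided N majority eps T \<longrightarrow>
     ereal_of_enat (rcost N T) \<ge> ereal (2/3 * real N - eps * real N - c * sqrt (real N))"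
proof (intro exI[of _ 1] allI impI)
  fix N :: nat and eps :: real and T :: "xtree pmf"
  assume N: "N \<ge> 1" and e0: "0 \<le> eps" and e1: "eps \<le> 1" and rt: "rtree_on N T"
    and zs: "zero_sided N majority eps T"
  define L where "L = {X::bool list. length X = N}"
  have finL: "finite L" unfolding L_def by (rule lists_finite)
  have cardL: "card L = 2^N" unfolding L_def by (rule lists_card)
  have none_prob: "measure_pmf.prob T {t. run t X = None} \<le> eps" if X: "X \<in> L" for X
  proof -
    have len: "length X = N" using X by (simp add: L_def)
    have a: "measure_pmf.prob T {t. run t X = Some (majority X)} \<ge> 1 - eps"
      using conjunct1[OF mp[OF spec[OF zs[unfolded zero_sided_def], of X] len]] .
    have "measure_pmf.prob T ({t. run t X = None} \<union> {t. run t X = Some (majority X)})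
        = measure_pmf.prob T {t. run t X = None} + measure_pmf.prob T {t. run t X = Some (majority X)}"
      by (rule measure_pmf.finite_measure_Union) auto
    moreover have "measure_pmf.prob T ({t. run t X = None} \<union> {t. run t X = Some (majority X)}) \<le> 1"
      by (rule measure_pmf.prob_le_1)
    ultimately show ?thesis using a by linarith
  qed
  define gn where "gn t = card {X\<in>L. run t X = None}" for t
  define g where "g t = (\<Sum>X\<in>L. indicator {t. run t X = None} t :: real)" for t
  have g_gn: "g t = real (gn t)" for t
    unfolding g_def gn_def using real_card_filter[OF finL, of "\<lambda>X. run t X = None"]
    by (simp add: indicator_def of_bool_def)
  have intg: "integrable (measure_pmf T) g"
    unfolding g_def by (rule Bochner_Integration.integrable_sum) (auto intro!: integrable_real_indicator simp: less_top[symmetric])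
  have Eg: "measure_pmf.expectation T g = (\<Sum>X\<in>L. measure_pmf.prob T {t. run t X = None})"
    unfolding g_def by (subst Bochner_Integration.integral_sum) (auto intro!: integrable_real_indicator simp: less_top[symmetric])
  also have "\<dots> \<le> (\<Sum>X\<in>L. eps)" by (rule sum_mono) (rule none_prob)
  also have "\<dots> = eps * 2^N" using cardL by simp
  finally have Egle: "measure_pmf.expectation T g \<le> eps * 2^N" .
  obtain t1 where t1: "t1 \<in> set_pmf T" using set_pmf_not_empty[of T] by blast
  obtain t0 where t0: "t0 \<in> set_pmf T" and t0min: "\<forall>t. t \<in> set_pmf T \<longrightarrow> gn t0 \<le> gn t"
    using ex_has_least_nat[of "\<lambda>t. t \<in> set_pmf T" t1 gn] t1 by blast
  have "real (gn t0) \<le> measure_pmf.expectation T g"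
    by (rule measure_pmf.integral_ge_const[OF intg]) (rule AE_pmfI, use t0min g_gn in simp)
  then have gn0: "real (gn t0) \<le> eps * 2^N" using Egle by linarith
  have vt: "valid_tree N t0" using rt t0 unfolding rtree_on_def by blast
  have zt: "\<forall>X\<in>sat N []. run t0 X = Some (majority X) \<or> run t0 X = None"
  proof
    fix X assume "X \<in> sat N []"
    then have len: "length X = N" by (simp add: sat_def)
    have "\<forall>t\<in>set_pmf T. run t X = Some (majority X) \<or> run t X = None"
      using conjunct2[OF mp[OF spec[OF zs[unfolded zero_sided_def], of X] len]] .
    from this t0 show "run t0 X = Some (majority X) \<or> run t0 X = None" by (rule bspec)
  qed
  have TB: "(\<Sum>X\<in>L. real (nqueries t0 X) + Fv N t0 X) \<ge> real (card L) * (2/3) * Phi N L"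
    using tree_bound[OF vt _ zt] unfolding sat_Nil L_def by simp
  have PL: "Phi N L = real N" unfolding L_def by (rule Phi_full)
  have Fv_le: "Fv N t0 X \<le> (if run t0 X = None then real N else 0) + \<bar>sum_list (map sr X)\<bar>" if X: "X \<in> L" for X
  proof -
    have "(\<Sum>k<N. sr (X!k)) = sum_list (map sr X)" using sr_sum_list[of X] X unfolding L_def by simp
    then show ?thesis unfolding Fv_def by simp
  qed
  have sumFv: "(\<Sum>X\<in>L. Fv N t0 X) \<le> real N * real (gn t0) + sqrt (real N) * 2^N"
  proof -
    have "(\<Sum>X\<in>L. Fv N t0 X) \<le> (\<Sum>X\<in>L. (if run t0 X = None then real N else 0) + \<bar>sum_list (map sr X)\<bar>)"
      by (rule sum_mono) (rule Fv_le)
    also have "\<dots> = (\<Sum>X\<in>L. (if run t0 X = None then real N else 0)) + (\<Sum>X\<in>L. \<bar>sum_list (map sr X)\<bar>)"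
      by (rule sum.distrib)
    also have "(\<Sum>X\<in>L. (if run t0 X = None then real N else 0)) = real N * real (gn t0)"
    proof -
      have "(\<Sum>X\<in>L. (if run t0 X = None then real N else 0)) = (\<Sum>X\<in>L. real N * (if run t0 X = None then 1 else 0))"
        by (rule sum.cong) auto
      also have "\<dots> = real N * (\<Sum>X\<in>L. (if run t0 X = None then 1 else 0))" by (simp add: sum_distrib_left)
      finally show ?thesis unfolding gn_def using real_card_filter[OF finL, of "\<lambda>X. run t0 X = None"] by simp
    qed
    also have "(\<Sum>X\<in>L. \<bar>sum_list (map sr X)\<bar>) \<le> sqrt (real N) * 2^N"
      unfolding L_def by (rule abs_sum_bound[OF N])
    finally show ?thesis by simp
  qed
  show "ereal (2/3 * real N - eps * real N - 1 * sqrt (real N)) \<le> ereal_of_enat (rcost N T)"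
  proof (cases "rcost N T")
    case infinity
    then show ?thesis by simp
  next
    case (enat D)
    have nqD: "nqueries t0 X \<le> D" if X: "X \<in> L" for X
    proof -
      have "enat (nqueries t0 X) \<le> (SUP t\<in>set_pmf T. enat (nqueries t X))"
        by (rule SUP_upper[OF t0])
      also have "\<dots> \<le> rcost N T" unfolding rcost_def by (rule SUP_upper) (use X in \<open>simp add: L_def\<close>)
      finally show ?thesis using enat by simp
    qed
    have sumnq: "(\<Sum>X\<in>L. real (nqueries t0 X)) \<le> real D * 2^N"
    proof -
      have "(\<Sum>X\<in>L. real (nqueries t0 X)) \<le> (\<Sum>X\<in>L. real D)" by (rule sum_mono) (simp add: nqD)
      then show ?thesis using cardL by (simp add: mult.commute)
    qed
    have main: "real D * 2^N + real N * (eps * 2^N) + sqrt (real N) * 2^N \<ge> 2^N * (2/3) * real N"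
    proof -
      have "2^N * (2/3) * real N \<le> (\<Sum>X\<in>L. real (nqueries t0 X) + Fv N t0 X)"
        using TB PL cardL by simp
      also have "\<dots> = (\<Sum>X\<in>L. real (nqueries t0 X)) + (\<Sum>X\<in>L. Fv N t0 X)" by (rule sum.distrib)
      also have "\<dots> \<le> real D * 2^N + (real N * real (gn t0) + sqrt (real N) * 2^N)"
        using sumnq sumFv by linarith
      also have "\<dots> \<le> real D * 2^N + (real N * (eps * 2^N) + sqrt (real N) * 2^N)"
        using gn0 by (simp add: mult_left_mono)
      finally show ?thesis by simp
    qed
    have "(2^N::real) * (2/3 * real N - eps * real N - sqrt (real N)) \<le> 2^N * real D"
      using main by (simp add: algebra_simps)
    then have "2/3 * real N - eps * real N - sqrt (real N) \<le> real D"
      by (simp add: mult_le_cancel_left_pos)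
    then show ?thesis using enat by simp
  qed
qed



end
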